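(* Let $G = (V,E)$ be a finite simple graph with $m$ edges and adjacency matrix $A_G$, let $\mu_1 \geq \mu_2$ be the two largest eigenvalues of $A_G$, and let $\mathbf{v}_1, \mathbf{v}_2$ be real unit eigenvectors of $A_G$ for $\mu_1, \mu_2$ respectively, taken from an orthonormal eigenbasis of $A_G$. Let $r > 1$ be real and suppose $$\sum_{ij \in E} (\mu_1 \mathbf{v}_1(i) \mathbf{v}_1(j) + \mu_2 \mathbf{v}_2(i) \mathbf{v}_2(j))^2 \leq \frac{r - 1}{r} \sum_{i, j \in V} (\mu_1 \mathbf{v}_1(i) \mathbf{v}_1(j) + \mu_2 \mathbf{v}_2(i) \mathbf{v}_2(j))^2,$$ or equivalently, with $K = \frac{r - 1}{r} J - A_G$, $$\mu_1^2 (\mathbf{v}_1 \circ \mathbf{v}_1)^T K (\mathbf{v}_1 \circ \mathbf{v}_1) + \mu_2^2 (\mathbf{v}_2 \circ \mathbf{v}_2)^T K (\mathbf{v}_2 \circ \mathbf{v}_2) + 2 \mu_1\mu_2 (\mathbf{v}_1 \circ \mathbf{v}_2)^T K (\mathbf{v}_1 \circ \mathbf{v}_2) \geq 0.$$ Then $$\mu_1^2 + \mu_2^2 \leq \frac{r - 1}{r} \cdot 2m.$$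
   Context: $J$ denotes the all-ones $V\times V$ matrix. For vectors $\mathbf{x}, \mathbf{y} \in \mathbb{R}^V$, $\mathbf{x} \circ \mathbf{y}$ is the entrywise product, $(\mathbf{x}\circ\mathbf{y})(i) = \mathbf{x}(i)\mathbf{y}(i)$. The sum over $ij \in E$ ranges over edges; the sum over $i,j\in V$ ranges over all ordered pairs. *)

theory Defs
  imports "HOL-Analysis.Analysis"
begin

definition simple_graph :: "('n::finite \<Rightarrow> 'n \<Rightarrow> bool) \<Rightarrow> bool" where
  "simple_graph E \<longleftrightarrow> (\<forall>i j. E i j \<longrightarrow> E j i) \<and> (\<forall>i. \<not> E i i)"

definition adj_matrix :: "('n::finite \<Rightarrow> 'n \<Rightarrow> bool) \<Rightarrow> real^'n^'n" where
  "adj_matrix E = (\<chi> i j. if E i j then 1 else 0)"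

definition num_edges :: "('n::finite \<Rightarrow> 'n \<Rightarrow> bool) \<Rightarrow> nat" where
  "num_edges E = card {{i, j} | i j. E i j}"

definition orthonormal_eigenbasis ::
  "real^'n^'n \<Rightarrow> ('n::finite \<Rightarrow> real^'n) \<Rightarrow> ('n \<Rightarrow> real) \<Rightarrow> bool" where
  "orthonormal_eigenbasis M b lam \<longleftrightarrow>
     (\<forall>k l. b k \<bullet> b l = (if k = l then 1 else 0)) \<and>
     (\<forall>k. M *v b k = lam k *\<^sub>R b k)"

end

theory Submission
  imports Defs
begin

lemma edge_count:
  fixes E :: "'n::finite \<Rightarrow> 'n \<Rightarrow> bool"
  assumes "simple_graph E"
  shows "card {(i, j). E i j} = 2 * num_edges E"
proof -
  let ?S = "{(i, j). E i j}"
  let ?h = "\<lambda>p. {fst p, snd p}"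
  have ed: "{{i, j} | i j. E i j} = ?h ` ?S" 
  proof (intro equalityI subsetI)
    fix e assume "e \<in> {{i, j} | i j. E i j}"
    then obtain i j where "e = {i, j}" "E i j" by blast
    then have "e = ?h (i, j)" "(i, j) \<in> ?S" by auto
    then show "e \<in> ?h ` ?S" by blast
  next
    fix e assume "e \<in> ?h ` ?S"
    then obtain i j where "e = {i, j}" "E i j" by auto
    then show "e \<in> {{i, j} | i j. E i j}" by blast
  qed
  have "card ?S = (\<Sum>p\<in>?S. 1::nat)" by simp
  also have "\<dots> = (\<Sum>e\<in>?h ` ?S. \<Sum>p\<in>{p. p \<in> ?S \<and> ?h p = e}. 1)"
    by (rule sum.group[symmetric]) auto
  also have "\<dots> = (\<Sum>e\<in>?h ` ?S. 2)"
  proof (rule sum.cong[OF refl])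
    fix e assume "e \<in> ?h ` ?S"
    then obtain i j where ij: "E i j" "e = {i, j}" by auto
    have ne: "i \<noteq> j" using ij assms unfolding simple_graph_def by auto
    have "{p. p \<in> ?S \<and> ?h p = e} = {(i, j), (j, i)}"
      using ij assms unfolding simple_graph_def by (auto simp: doubleton_eq_iff)
    then show "(\<Sum>p\<in>{p. p \<in> ?S \<and> ?h p = e}. 1) = (2::nat)" using ne by simp
  qed
  also have "\<dots> = 2 * num_edges E" unfolding num_edges_def ed by simp
  finally show ?thesis .
qed

theorem lemma2p2:
  fixes E :: "'n::finite \<Rightarrow> 'n \<Rightarrow> bool"
    and b :: "'n \<Rightarrow> real^'n" and lam :: "'n \<Rightarrow> real"
    and k1 k2 :: 'n and r :: real
  assumes "simple_graph E"
    and "orthonormal_eigenbasis (adj_matrix E) b lam"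
    and "k1 \<noteq> k2"
    and "\<forall>k. lam k \<le> lam k1"
    and "\<forall>k. k \<noteq> k1 \<longrightarrow> lam k \<le> lam k2"
    and "r > 1"
    and "(\<Sum>(i, j) \<in> {(i, j). E i j}.
            (lam k1 * (b k1 $ i) * (b k1 $ j) + lam k2 * (b k2 $ i) * (b k2 $ j))\<^sup>2)
         \<le> (r - 1) / r * (\<Sum>i\<in>UNIV. \<Sum>j\<in>UNIV.
            (lam k1 * (b k1 $ i) * (b k1 $ j) + lam k2 * (b k2 $ i) * (b k2 $ j))\<^sup>2)"
  shows "(lam k1)\<^sup>2 + (lam k2)\<^sup>2 \<le> (r - 1) / r * (2 * real (num_edges E))"
proof -
  define f where "f i j = lam k1 * (b k1 $ i) * (b k1 $ j) + lam k2 * (b k2 $ i) * (b k2 $ j)" for i j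
  define S where "S = {(i, j). E i j}"
  have ob: "\<And>k l. (\<Sum>i\<in>UNIV. b k $ i * b l $ i) = (if k = l then 1 else 0)"
    using assms(2) unfolding orthonormal_eigenbasis_def inner_vec_def by simp
  have ev: "\<And>k i. (\<Sum>j\<in>UNIV. (if E i j then 1 else 0) * b k $ j) = lam k * b k $ i"
  proof -
    fix k i
    have "(adj_matrix E *v b k) $ i = (lam k *\<^sub>R b k) $ i"
      using assms(2) unfolding orthonormal_eigenbasis_def by simp
    then show "(\<Sum>j\<in>UNIV. (if E i j then 1 else 0) * b k $ j) = lam k * b k $ i"
      unfolding adj_matrix_def matrix_vector_mult_def by simp
  qed
  have quad: "\<And>k l. (\<Sum>i\<in>UNIV. \<Sum>j\<in>UNIV. (if E i j then 1 else 0) * (b k $ i * b l $ j))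
      = (if k = l then lam l else 0)"
  proof -
    fix k l
    have "(\<Sum>i\<in>UNIV. \<Sum>j\<in>UNIV. (if E i j then 1 else 0) * (b k $ i * b l $ j))
        = (\<Sum>i\<in>UNIV. b k $ i * (\<Sum>j\<in>UNIV. (if E i j then 1 else 0) * b l $ j))"
      by (simp add: sum_distrib_left algebra_simps)
    also have "\<dots> = (\<Sum>i\<in>UNIV. lam l * (b k $ i * b l $ i))"
      using ev by (simp add: mult.commute mult.left_commute)
    also have "\<dots> = lam l * (if k = l then 1 else 0)"
      by (simp add: sum_distrib_left[symmetric] ob)
    finally show "?thesis k l" by simp
  qed
  have sumS: "\<And>g::'n \<times> 'n \<Rightarrow> real. (\<Sum>p\<in>S. g p) = (\<Sum>i\<in>UNIV. \<Sum>j\<in>UNIV. (if E i j then 1 else 0) * g (i, j))"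
  proof -
    fix g :: "'n \<times> 'n \<Rightarrow> real"
    have "(\<Sum>p\<in>S. g p) = (\<Sum>p\<in>UNIV. if p \<in> S then g p else 0)"
      by (simp add: sum.If_cases)
    also have "\<dots> = (\<Sum>(i,j)\<in>UNIV \<times> UNIV. (if E i j then 1 else 0) * g (i, j))"
      by (rule sum.cong) (auto simp: S_def)
    also have "\<dots> = (\<Sum>i\<in>UNIV. \<Sum>j\<in>UNIV. (if E i j then 1 else 0) * g (i, j))"
      by (rule sum.cartesian_product[symmetric])
    finally show "?thesis g" .
  qed
  have lin: "(\<Sum>p\<in>S. f (fst p) (snd p)) = (lam k1)\<^sup>2 + (lam k2)\<^sup>2"
  proof -
    have "(\<Sum>p\<in>S. f (fst p) (snd p)) =
      lam k1 * (\<Sum>i\<in>UNIV. \<Sum>j\<in>UNIV. (if E i j then 1 else 0) * (b k1 $ i * b k1 $ j))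
      + lam k2 * (\<Sum>i\<in>UNIV. \<Sum>j\<in>UNIV. (if E i j then 1 else 0) * (b k2 $ i * b k2 $ j))"
      unfolding sumS f_def
      by (simp add: sum_distrib_left sum.distrib[symmetric] algebra_simps)
    then show ?thesis by (simp add: quad power2_eq_square)
  qed
  have frob: "(\<Sum>i\<in>UNIV. \<Sum>j\<in>UNIV. (f i j)\<^sup>2) = (lam k1)\<^sup>2 + (lam k2)\<^sup>2"
  proof -
    have "(\<Sum>i\<in>UNIV. \<Sum>j\<in>UNIV. (f i j)\<^sup>2) =
       (lam k1)\<^sup>2 * ((\<Sum>i\<in>UNIV. b k1 $ i * b k1 $ i) * (\<Sum>j\<in>UNIV. b k1 $ j * b k1 $ j))
     + 2 * lam k1 * lam k2 * ((\<Sum>i\<in>UNIV. b k1 $ i * b k2 $ i) * (\<Sum>j\<in>UNIV. b k1 $ j * b k2 $ j))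
     + (lam k2)\<^sup>2 * ((\<Sum>i\<in>UNIV. b k2 $ i * b k2 $ i) * (\<Sum>j\<in>UNIV. b k2 $ j * b k2 $ j))"
      unfolding f_def sum_product
      by (simp add: sum_distrib_left sum.distrib[symmetric] algebra_simps power2_eq_square)
    then show ?thesis using assms(3) by (simp add: ob)
  qed
  have cardS: "real (card S) = 2 * real (num_edges E)"
    using edge_count[OF assms(1)] unfolding S_def by simp
  define s where "s = (lam k1)\<^sup>2 + (lam k2)\<^sup>2"
  define T where "T = (\<Sum>p\<in>S. (f (fst p) (snd p))\<^sup>2)"
  have hyp: "T \<le> (r - 1) / r * s"
    using assms(7) unfolding T_def s_def frob[symmetric] S_def f_def
    by (simp add: case_prod_beta)
  have cs: "s\<^sup>2 \<le> T * real (card S)"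
    using sum_squared_le_sum_of_squares[of "\<lambda>p. f (fst p) (snd p)" S]
    unfolding lin T_def s_def .
  have s0: "s \<ge> 0" unfolding s_def by simp
  have c0: "0 \<le> (r - 1) / r" using assms(6) by simp
  have m0: "0 \<le> real (num_edges E)" by simp
  show ?thesis
  proof (cases "s = 0")
    case True then show ?thesis unfolding s_def[symmetric] using c0 m0 by (simp only: mult_nonneg_nonneg)
  next
    case False
    then have sp: "s > 0" using s0 by simp
    have "T * real (card S) \<le> ((r - 1) / r * s) * real (card S)"
      using hyp by (rule mult_right_mono) simp
    then have "s * s \<le> ((r - 1) / r * s) * real (card S)"
      using cs by (simp only: power2_eq_square)
    then have "s * s \<le> s * ((r - 1) / r * real (card S))" by (simp add: algebra_simps)
    then have "s \<le> (r - 1) / r * real (card S)" using sp by (rule mult_left_le_imp_le)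
    then show ?thesis unfolding s_def cardS .
  qed
qed

end
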